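(* For every $d\in\mathbb{N}$, the minimum size $n$ of a weighted projective $2$-design $\{x_k\}_{k\in[n]}$ for $\mathbb{C}^d$ equals $\operatorname{ebr}(\mathfrak{Z}_d)$.
   Context: Write $[n]=\{1,\dots,n\}$. Let $\Pi_d^{(2)}$ denote the orthogonal projection of $\mathbb{C}^d\otimes\mathbb{C}^d$ onto its symmetric subspace $(\mathbb{C}^d)^{\otimes 2}_{\mathrm{sym}}$ (which has dimension $\binom{d+1}{2}$). Unit vectors $\{x_k\}_{k\in[n]}$ in $\mathbb{C}^d$ form a weighted projective $2$-design (of size $n$) if there are weights $w_k\ge 0$ with $\sum_{k}w_k=1$ and $\sum_{k\in[n]}w_k(x_k\otimes x_k)(x_k\otimes x_k)^*=\binom{d+1}{2}^{-1}\Pi_d^{(2)}$. A linear map $\Phi:\mathbb{C}^{d\times d}\to\mathbb{C}^{m\times m}$ is entanglement breaking if it admits a decomposition $\Phi(X)=\sum_{k\in[n]}R_kXR_k^*$ for all $X$, with $R_k\in\mathbb{C}^{m\times d}$, $\sum_k R_k^*R_k=I_d$ and $\operatorname{rank}R_k=1$ for every $k$; its entanglement breaking rank $\operatorname{ebr}(\Phi)$ is the smallest such $n$. The map $\mathfrak{Z}_d:\mathbb{C}^{d\times d}\to\mathbb{C}^{d\times d}$ is $\mathfrak{Z}_d(X)=\frac{1}{d+1}(X+\operatorname{tr}(X)\, I_d)$ (it is entanglement breaking). *)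

theory Defs
  imports Complex_Main "Jordan_Normal_Form.Matrix" "Jordan_Normal_Form.DL_Rank"
          "Jordan_Normal_Form.Schur_Decomposition"
begin

definition msum :: "nat \<Rightarrow> nat \<Rightarrow> nat \<Rightarrow> (nat \<Rightarrow> complex mat) \<Rightarrow> complex mat" where
  "msum nr nc n A = mat nr nc (\<lambda>(i,j). \<Sum>k<n. A k $$ (i,j))"

definition mtrace :: "complex mat \<Rightarrow> complex" where
  "mtrace X = (\<Sum>i<dim_row X. X $$ (i,i))"

definition vnorm2 :: "complex vec \<Rightarrow> real" where
  "vnorm2 x = (\<Sum>i<dim_vec x. (cmod (x $ i))\<^sup>2)"

(* Kronecker (tensor) product of vectors: C^a \<otimes> C^b = C^(a*b), index (i,j) \<mapsto> i*b + j *)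
definition tensor_vec :: "complex vec \<Rightarrow> complex vec \<Rightarrow> complex vec" where
  "tensor_vec x y = vec (dim_vec x * dim_vec y)
     (\<lambda>p. x $ (p div dim_vec y) * y $ (p mod dim_vec y))"

definition outer :: "complex vec \<Rightarrow> complex mat" where
  "outer v = mat (dim_vec v) (dim_vec v) (\<lambda>(i,j). v $ i * cnj (v $ j))"

(* Swap (flip) operator on C^d \<otimes> C^d: e_i \<otimes> e_j \<mapsto> e_j \<otimes> e_i *)
definition swap_op :: "nat \<Rightarrow> complex mat" where
  "swap_op d = mat (d*d) (d*d)
     (\<lambda>(p,q). if p div d = q mod d \<and> p mod d = q div d then 1 else 0)"

definition sym_proj :: "nat \<Rightarrow> complex mat" where
  "sym_proj d = (1/2 :: complex) \<cdot>\<^sub>m (1\<^sub>m (d*d) + swap_op d)"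

definition weighted_proj_2design :: "nat \<Rightarrow> nat \<Rightarrow> (nat \<Rightarrow> complex vec) \<Rightarrow> bool" where
  "weighted_proj_2design d n x \<longleftrightarrow>
     (\<forall>k<n. x k \<in> carrier_vec d \<and> vnorm2 (x k) = 1) \<and>
     (\<exists>w :: nat \<Rightarrow> real. (\<forall>k<n. w k \<ge> 0) \<and> (\<Sum>k<n. w k) = 1 \<and>
        msum (d*d) (d*d) n (\<lambda>k. complex_of_real (w k) \<cdot>\<^sub>m outer (tensor_vec (x k) (x k)))
        = complex_of_real (1 / real ((d+1) choose 2)) \<cdot>\<^sub>m sym_proj d)"

(* Entanglement-breaking (Kraus rank-one) decomposition of size n of \<Phi> : C^{dxd} \<rightarrow> C^{mxm} *)
definition eb_decomp :: "nat \<Rightarrow> nat \<Rightarrow> (complex mat \<Rightarrow> complex mat) \<Rightarrow> nat \<Rightarrow> (nat \<Rightarrow> complex mat) \<Rightarrow> bool" where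
  "eb_decomp d m \<Phi> n R \<longleftrightarrow>
     (\<forall>k<n. R k \<in> carrier_mat m d \<and> vec_space.rank m (R k) = 1) \<and>
     msum d d n (\<lambda>k. mat_adjoint (R k) * R k) = 1\<^sub>m d \<and>
     (\<forall>X \<in> carrier_mat d d. \<Phi> X = msum m m n (\<lambda>k. R k * X * mat_adjoint (R k)))"

definition entanglement_breaking :: "nat \<Rightarrow> nat \<Rightarrow> (complex mat \<Rightarrow> complex mat) \<Rightarrow> bool" where
  "entanglement_breaking d m \<Phi> \<longleftrightarrow> (\<exists>n R. eb_decomp d m \<Phi> n R)"

definition ebr :: "nat \<Rightarrow> nat \<Rightarrow> (complex mat \<Rightarrow> complex mat) \<Rightarrow> nat" where
  "ebr d m \<Phi> = (LEAST n. \<exists>R. eb_decomp d m \<Phi> n R)"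

definition Zmap :: "nat \<Rightarrow> complex mat \<Rightarrow> complex mat" where
  "Zmap d X = (1 / of_nat (d+1) :: complex) \<cdot>\<^sub>m (X + mtrace X \<cdot>\<^sub>m 1\<^sub>m d)"

end

theory Submission
  imports Defs
begin


context vec_space begin
lemma rank_ge1:
  assumes A: "A \<in> carrier_mat n nc" and i: "i < n" and j: "j < nc" and nz: "A $$ (i,j) \<noteq> 0"
  shows "rank A \<ge> 1"
proof -
  have cj: "col A j \<in> carrier_vec n" using A by auto
  have li: "lin_indpt {col A j}"
  proof (rule finite_lin_indpt2)
    show "finite {col A j}" by simp
    show "{col A j} \<subseteq> carrier_vec n" using cj by simp
    fix a assume "True" and lc: "lincomb a {col A j} = 0\<^sub>v n"
    have "lincomb a {col A j} $ i = a (col A j) * col A j $ i"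
      using lincomb_index[OF i, of "{col A j}" a] cj by simp
    moreover have "col A j $ i = A $$ (i,j)" using A i j by simp
    moreover have "lincomb a {col A j} $ i = 0" using lc i by simp
    ultimately show "\<forall>v\<in>{col A j}. a v = 0" using nz by simp
  qed
  have "{col A j} \<subseteq> set (cols A)" using A j by (auto simp: cols_def)
  from rank_ge_card_indpt[OF A this li] show ?thesis by simp
qed

lemma rank_ge2:
  assumes A: "A \<in> carrier_mat n nc" and a: "a < n" and b: "b < n" and c: "c < nc" and e: "e < nc"
    and nz: "A $$ (a,c) * A $$ (b,e) \<noteq> A $$ (a,e) * A $$ (b,c)"
  shows "rank A \<ge> 2"
proof -
  let ?u = "col A c" and ?v = "col A e"
  have cu: "?u \<in> carrier_vec n" "?v \<in> carrier_vec n" using A by auto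
  have ent: "?u $ a = A $$ (a,c)" "?u $ b = A $$ (b,c)" "?v $ a = A $$ (a,e)" "?v $ b = A $$ (b,e)"
    using A a b c e by auto
  have neq: "?u \<noteq> ?v"
  proof
    assume "?u = ?v" then have "A $$ (a,c) = A $$ (a,e)" "A $$ (b,c) = A $$ (b,e)" using ent by metis+
    then show False using nz by (simp add: mult.commute)
  qed
  have li: "lin_indpt {?u, ?v}"
  proof (rule finite_lin_indpt2)
    show "finite {?u, ?v}" by simp
    show "{?u, ?v} \<subseteq> carrier_vec n" using cu by simp
    fix f assume "True" and lc: "lincomb f {?u, ?v} = 0\<^sub>v n"
    have "lincomb f {?u, ?v} $ a = f ?u * ?u $ a + f ?v * ?v $ a"
      using lincomb_index[OF a, of "{?u, ?v}" f] cu neq by simp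
    moreover have "lincomb f {?u, ?v} $ b = f ?u * ?u $ b + f ?v * ?v $ b"
      using lincomb_index[OF b, of "{?u, ?v}" f] cu neq by simp
    moreover have "lincomb f {?u, ?v} $ a = 0" "lincomb f {?u, ?v} $ b = 0" using lc a b by simp_all
    ultimately have e1: "f ?u * A $$ (a,c) + f ?v * A $$ (a,e) = 0"
      and e2: "f ?u * A $$ (b,c) + f ?v * A $$ (b,e) = 0" using ent by simp_all
    have "f ?u * (A $$ (a,c) * A $$ (b,e) - A $$ (a,e) * A $$ (b,c)) = 
      (f ?u * A $$ (a,c) + f ?v * A $$ (a,e)) * A $$ (b,e) - (f ?u * A $$ (b,c) + f ?v * A $$ (b,e)) * A $$ (a,e)"
      by (simp add: algebra_simps)
    then have "f ?u = 0" using e1 e2 nz by simp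
    moreover have "f ?v * (A $$ (a,c) * A $$ (b,e) - A $$ (a,e) * A $$ (b,c)) = 
      (f ?u * A $$ (b,c) + f ?v * A $$ (b,e)) * A $$ (a,c) - (f ?u * A $$ (a,c) + f ?v * A $$ (a,e)) * A $$ (b,c)"
      by (simp add: algebra_simps)
    then have "f ?v = 0" using e1 e2 nz by simp
    ultimately show "\<forall>w\<in>{?u, ?v}. f w = 0" by simp
  qed
  have "{?u, ?v} \<subseteq> set (cols A)" using A c e by (auto simp: cols_def)
  from rank_ge_card_indpt[OF A this li] show ?thesis using neq by simp
qed
end



lemma adj_index: "i < dim_col A \<Longrightarrow> j < dim_row A \<Longrightarrow> mat_adjoint A $$ (i,j) = cnj (A $$ (j,i))"
  unfolding mat_adjoint_def by (simp add: mat_of_rows_def)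
lemma adj_dims[simp]: "dim_row (mat_adjoint A) = dim_col A" "dim_col (mat_adjoint A) = dim_row A"
  unfolding mat_adjoint_def by (auto simp: mat_of_rows_def)

lemma msum_index: "i < nr \<Longrightarrow> j < nc \<Longrightarrow> msum nr nc n A $$ (i,j) = (\<Sum>k<n. A k $$ (i,j))"
  unfolding msum_def by simp
lemma msum_dims[simp]: "dim_row (msum nr nc n A) = nr" "dim_col (msum nr nc n A) = nc"
  unfolding msum_def by simp_all

lemma triple_index:
  assumes R: "R \<in> carrier_mat m d" and X: "X \<in> carrier_mat d d" and a: "a < m" and b: "b < m"
  shows "(R * X * mat_adjoint R) $$ (a,b) = (\<Sum>i<d. \<Sum>j<d. R $$ (a,i) * X $$ (i,j) * cnj (R $$ (b,j)))"
proof -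
  have "(R * X * mat_adjoint R) $$ (a,b) = (\<Sum>j<d. (R * X) $$ (a,j) * mat_adjoint R $$ (j,b))"
    using R X a b by (simp add: scalar_prod_def lessThan_atLeast0)
  also have "\<dots> = (\<Sum>j<d. (\<Sum>i<d. R $$ (a,i) * X $$ (i,j)) * cnj (R $$ (b,j)))"
    using R X a b by (intro sum.cong refl) (simp add: scalar_prod_def lessThan_atLeast0 adj_index)
  also have "\<dots> = (\<Sum>j<d. \<Sum>i<d. R $$ (a,i) * X $$ (i,j) * cnj (R $$ (b,j)))"
    by (simp add: sum_distrib_right)
  also have "\<dots> = (\<Sum>i<d. \<Sum>j<d. R $$ (a,i) * X $$ (i,j) * cnj (R $$ (b,j)))"
    by (rule sum.swap)
  finally show ?thesis .
qed

lemma adjR_index: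
  assumes R: "R \<in> carrier_mat m d" and c: "c < d" and e: "e < d"
  shows "(mat_adjoint R * R) $$ (c,e) = (\<Sum>a<m. R $$ (a,e) * cnj (R $$ (a,c)))"
  using R c e by (simp add: scalar_prod_def lessThan_atLeast0 adj_index mult.commute)

lemma Zmap_index:
  assumes X: "X \<in> carrier_mat d d" and a: "a < d" and b: "b < d"
  shows "Zmap d X $$ (a,b) = (X $$ (a,b) + (if a = b then (\<Sum>i<d. X $$ (i,i)) else 0)) / of_nat (d+1)"
  using X a b by (simp add: Zmap_def mtrace_def)

lemma Zmap_dims[simp]: "X \<in> carrier_mat d d \<Longrightarrow> dim_row (Zmap d X) = d"  "X \<in> carrier_mat d d \<Longrightarrow> dim_col (Zmap d X) = d"
  by (simp_all add: Zmap_def)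


definition Gc :: "nat \<Rightarrow> nat \<Rightarrow> (nat \<Rightarrow> complex mat) \<Rightarrow> bool" where
  "Gc d n R \<longleftrightarrow> (\<forall>a<d. \<forall>b<d. \<forall>c<d. \<forall>e<d. (\<Sum>k<n. R k $$ (a,c) * cnj (R k $$ (b,e))) =
     ((if a=c \<and> b=e then 1 else 0) + (if a=b \<and> c=e then 1 else 0)) / of_nat (d+1))"

lemma eb_to_G:
  assumes R: "\<And>k. k<n \<Longrightarrow> R k \<in> carrier_mat d d"
    and Z: "\<forall>X \<in> carrier_mat d d. Zmap d X = msum d d n (\<lambda>k. R k * X * mat_adjoint (R k))"
  shows "Gc d n R"
  unfolding Gc_def
proof (intro allI impI)
  fix a b c e assume a: "a<d" and b: "b<d" and c: "c<d" and e: "e<d"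
  define X where "X = mat d d (\<lambda>(i,j). if i=c \<and> j=e then 1 else (0::complex))"
  have X: "X \<in> carrier_mat d d" unfolding X_def by simp
  have "Zmap d X $$ (a,b) = msum d d n (\<lambda>k. R k * X * mat_adjoint (R k)) $$ (a,b)" using Z X by simp
  also have "\<dots> = (\<Sum>k<n. \<Sum>i<d. \<Sum>j<d. R k $$ (a,i) * X $$ (i,j) * cnj (R k $$ (b,j)))"
    using a b by (simp add: msum_index triple_index[OF R X])
  also have "\<dots> = (\<Sum>k<n. R k $$ (a,c) * cnj (R k $$ (b,e)))"
  proof (intro sum.cong refl)
    fix k
    have "(\<Sum>i<d. \<Sum>j<d. R k $$ (a,i) * X $$ (i,j) * cnj (R k $$ (b,j))) =
       (\<Sum>i<d. \<Sum>j<d. if i = c \<and> j = e then R k $$ (a,i) * cnj (R k $$ (b,j)) else 0)"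
      by (intro sum.cong refl) (simp add: X_def)
    also have "\<dots> = (\<Sum>i<d. if i = c then (\<Sum>j<d. if j = e then R k $$ (a,i) * cnj (R k $$ (b,j)) else 0) else 0)"
      by (intro sum.cong refl) auto
    also have "\<dots> = R k $$ (a,c) * cnj (R k $$ (b,e))"
      using c e by (simp add: sum.delta)
    finally show "(\<Sum>i<d. \<Sum>j<d. R k $$ (a,i) * X $$ (i,j) * cnj (R k $$ (b,j))) = R k $$ (a,c) * cnj (R k $$ (b,e))" .
  qed
  finally have 1: "(\<Sum>k<n. R k $$ (a,c) * cnj (R k $$ (b,e))) = Zmap d X $$ (a,b)" ..
  have tr: "(\<Sum>i<d. X $$ (i,i)) = (if c = e then 1 else 0)"
    using c e by (simp add: X_def sum.delta)
  show "(\<Sum>k<n. R k $$ (a,c) * cnj (R k $$ (b,e))) =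
     ((if a=c \<and> b=e then 1 else 0) + (if a=b \<and> c=e then 1 else 0)) / of_nat (d+1)"
    unfolding 1 Zmap_index[OF X a b] tr using a b by (simp add: X_def)
qed


lemma G_to_TP:
  assumes R: "\<And>k. k<n \<Longrightarrow> R k \<in> carrier_mat d d" and G: "Gc d n R"
  shows "msum d d n (\<lambda>k. mat_adjoint (R k) * R k) = 1\<^sub>m d"
proof (rule eq_matI)
  fix c e assume c: "c < dim_row (1\<^sub>m d)" and e: "e < dim_col (1\<^sub>m d)"
  then have c: "c<d" and e: "e<d" by auto
  have "msum d d n (\<lambda>k. mat_adjoint (R k) * R k) $$ (c,e) = (\<Sum>k<n. \<Sum>a<d. R k $$ (a,e) * cnj (R k $$ (a,c)))"
    using c e by (simp add: msum_index adjR_index[OF R])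
  also have "\<dots> = (\<Sum>a<d. \<Sum>k<n. R k $$ (a,e) * cnj (R k $$ (a,c)))" by (rule sum.swap)
  also have "\<dots> = (\<Sum>a<d. ((if a=e \<and> a=c then 1 else 0) + (if c=e then 1 else 0)) / of_nat (d+1))"
    using G c e unfolding Gc_def by (intro sum.cong refl) auto
  also have "\<dots> = (if c = e then 1 else 0)"
  proof (cases "c = e")
    case True
    have "(\<Sum>a<d. ((if a=e \<and> a=c then 1 else 0) + (if c=e then 1 else 0)) / of_nat (d+1)) =
       (\<Sum>a<d. (if a=e then 1 else 0) / of_nat (d+1) + 1 / (of_nat (d+1) :: complex))"
      using True by (intro sum.cong refl) (auto simp: add_divide_distrib)
    also have "\<dots> = 1 / of_nat (d+1) + of_nat d / of_nat (d+1)"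
      using e by (simp add: sum.distrib sum.delta if_distrib[of "\<lambda>x. x / _"] cong: if_cong)
    also have "\<dots> = 1"
    proof -
      have nz: "(of_nat (d+1)::complex) \<noteq> 0" by (simp only: of_nat_eq_0_iff)
      have "1 / of_nat (d+1) + of_nat d / of_nat (d+1) = (of_nat (d+1) :: complex) / of_nat (d+1)"
        by (simp add: add_divide_distrib[symmetric])
      then show ?thesis using nz by simp
    qed
    finally show ?thesis using True by simp
  next
    case False
    have "(\<Sum>a<d. ((if a=e \<and> a=c then 1 else 0) + (if c=e then 1 else 0)) / (of_nat (d+1)::complex)) = (\<Sum>a<d. 0)"
      using False by (intro sum.cong refl) auto
    then show ?thesis using False by simp
  qed
  finally show "msum d d n (\<lambda>k. mat_adjoint (R k) * R k) $$ (c,e) = 1\<^sub>m d $$ (c,e)" using c e by simp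
qed auto

lemma G_to_Z:
  assumes R: "\<And>k. k<n \<Longrightarrow> R k \<in> carrier_mat d d" and G: "Gc d n R" and X: "X \<in> carrier_mat d d"
  shows "Zmap d X = msum d d n (\<lambda>k. R k * X * mat_adjoint (R k))"
proof (rule eq_matI)
  fix a b assume a: "a < dim_row (msum d d n (\<lambda>k. R k * X * mat_adjoint (R k)))" and b: "b < dim_col (msum d d n (\<lambda>k. R k * X * mat_adjoint (R k)))"
  then have a: "a<d" and b: "b<d" by auto
  have "msum d d n (\<lambda>k. R k * X * mat_adjoint (R k)) $$ (a,b) = (\<Sum>k<n. \<Sum>i<d. \<Sum>j<d. R k $$ (a,i) * X $$ (i,j) * cnj (R k $$ (b,j)))"
    using a b by (simp add: msum_index triple_index[OF R X])
  also have "\<dots> = (\<Sum>i<d. \<Sum>k<n. \<Sum>j<d. R k $$ (a,i) * X $$ (i,j) * cnj (R k $$ (b,j)))" by (rule sum.swap)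
  also have "\<dots> = (\<Sum>i<d. \<Sum>j<d. \<Sum>k<n. R k $$ (a,i) * X $$ (i,j) * cnj (R k $$ (b,j)))" 
    by (intro sum.cong refl sum.swap)
  also have "\<dots> = (\<Sum>i<d. \<Sum>j<d. X $$ (i,j) * (\<Sum>k<n. R k $$ (a,i) * cnj (R k $$ (b,j))))" 
    by (intro sum.cong refl) (simp add: sum_distrib_left mult.commute mult.left_commute)
  also have "\<dots> = (\<Sum>i<d. \<Sum>j<d. X $$ (i,j) * (((if a=i \<and> b=j then 1 else 0) + (if a=b \<and> i=j then 1 else 0)) / of_nat (d+1)))" 
    using G a b unfolding Gc_def by (intro sum.cong refl) auto
  also have "\<dots> = (\<Sum>i<d. \<Sum>j<d. (if i=a \<and> j=b then X $$ (i,j) else 0) / of_nat (d+1) + (if a=b \<and> j=i then X $$ (i,j) else 0) / of_nat (d+1))" 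
  proof (intro sum.cong refl)
    fix i j
    show "X $$ (i,j) * (((if a=i \<and> b=j then 1 else 0) + (if a=b \<and> i=j then 1 else 0)) / of_nat (d+1)) =
      (if i=a \<and> j=b then X $$ (i,j) else 0) / of_nat (d+1) + (if a=b \<and> j=i then X $$ (i,j) else 0) / of_nat (d+1)"
      by (simp add: add_divide_distrib distrib_left times_divide_eq_right eq_commute[of a i] eq_commute[of b j] eq_commute[of j i])
  qed
  also have "\<dots> = (\<Sum>i<d. (if i=a then X $$ (i,b) else 0) / of_nat (d+1) + (if a=b then X $$ (i,i) else 0) / of_nat (d+1))"
  proof (intro sum.cong refl)
    fix i assume i: "i \<in> {..<d}"
    have "(\<Sum>j<d. (if i=a \<and> j=b then X $$ (i,j) else 0) / of_nat (d+1)) = (if i=a then X $$ (i,b) else 0) / of_nat (d+1)"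
      using b by (cases "i=a") (simp_all add: sum.delta sum_divide_distrib[symmetric])
    moreover have "(\<Sum>j<d. (if a=b \<and> j=i then X $$ (i,j) else 0) / of_nat (d+1)) = (if a=b then X $$ (i,i) else 0) / of_nat (d+1)"
      using i by (cases "a=b") (simp_all add: sum.delta sum_divide_distrib[symmetric])
    ultimately show "(\<Sum>j<d. (if i=a \<and> j=b then X $$ (i,j) else 0) / of_nat (d+1) + (if a=b \<and> j=i then X $$ (i,j) else 0) / of_nat (d+1))
      = (if i=a then X $$ (i,b) else 0) / of_nat (d+1) + (if a=b then X $$ (i,i) else 0) / of_nat (d+1)"
      by (simp add: sum.distrib)
  qed
  also have "\<dots> = (X $$ (a,b) + (if a = b then (\<Sum>i<d. X $$ (i,i)) else 0)) / of_nat (d+1)"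
  proof -
    have s1: "(\<Sum>i<d. (if i=a then X $$ (i,b) else 0)) = X $$ (a,b)" using a by (simp add: sum.delta)
    have s2: "(\<Sum>i<d. (if a=b then X $$ (i,i) else 0)) = (if a = b then (\<Sum>i<d. X $$ (i,i)) else 0)" by simp
    show ?thesis
      by (simp only: sum.distrib sum_divide_distrib[symmetric] s1 s2 add_divide_distrib)
  qed
  also have "\<dots> = Zmap d X $$ (a,b)" using Zmap_index[OF X a b] by simp
  finally show "Zmap d X $$ (a,b) = msum d d n (\<lambda>k. R k * X * mat_adjoint (R k)) $$ (a,b)" by simp
qed (use X in auto)




lemma choose2: "2 * ((d+1) choose 2) = (d+1) * d"
proof -
  have "even ((d+1) * d)" by simp
  then show ?thesis unfolding choose_two by simp
qed

lemma const_eq: "complex_of_real (1 / real ((d+1) choose 2)) * (1/2) = 1 / of_nat (d*(d+1))"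
proof -
  have "(of_nat (2 * ((d+1) choose 2)) :: complex) = of_nat ((d+1) * d)" using choose2[of d] by simp
  then have N: "(of_nat ((d+1) choose 2) :: complex) = of_nat (d*(d+1)) / 2" by (simp add: algebra_simps)
  have "complex_of_real (1 / real ((d+1) choose 2)) = 1 / of_nat ((d+1) choose 2)"
    by (simp add: of_real_divide)
  moreover have "\<And>z::complex. 1 / (z / 2) * (1/2) = 1 / z" by simp
  ultimately show ?thesis unfolding N by metis
qed

lemma tensor_dim[simp]: "dim_vec (tensor_vec x y) = dim_vec x * dim_vec y"
  by (simp add: tensor_vec_def)

lemma outer_tensor_index:
  assumes x: "x \<in> carrier_vec d" and p: "p < d*d" and q: "q < d*d"
  shows "outer (tensor_vec x x) $$ (p,q) = x$(p div d) * x$(p mod d) * cnj (x$(q div d) * x$(q mod d))"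
  using x p q by (simp add: outer_def tensor_vec_def)

lemma outer_tensor_dims[simp]: "dim_row (outer (tensor_vec x x)) = dim_vec x * dim_vec x"
  "dim_col (outer (tensor_vec x x)) = dim_vec x * dim_vec x"
  by (simp_all add: outer_def)

definition Dc :: "nat \<Rightarrow> nat \<Rightarrow> (nat \<Rightarrow> complex vec) \<Rightarrow> (nat \<Rightarrow> real) \<Rightarrow> bool" where
  "Dc d n x w \<longleftrightarrow> (\<forall>a<d. \<forall>b<d. \<forall>c<d. \<forall>e<d.
     (\<Sum>k<n. complex_of_real (w k) * (x k $ a * x k $ b * cnj (x k $ c * x k $ e))) =
     ((if a=c \<and> b=e then 1 else 0) + (if a=e \<and> b=c then 1 else 0)) / of_nat (d*(d+1)))"

lemma lhs_index:
  assumes x: "\<And>k. k<n \<Longrightarrow> x k \<in> carrier_vec d" and p: "p < d*d" and q: "q < d*d"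
  shows "msum (d*d) (d*d) n (\<lambda>k. complex_of_real (w k) \<cdot>\<^sub>m outer (tensor_vec (x k) (x k))) $$ (p,q)
    = (\<Sum>k<n. complex_of_real (w k) * (x k $ (p div d) * x k $ (p mod d) * cnj (x k $ (q div d) * x k $ (q mod d))))"
proof -
  have "\<And>k. k<n \<Longrightarrow> (complex_of_real (w k) \<cdot>\<^sub>m outer (tensor_vec (x k) (x k))) $$ (p,q) =
     complex_of_real (w k) * (x k $ (p div d) * x k $ (p mod d) * cnj (x k $ (q div d) * x k $ (q mod d)))"
  proof -
    fix k assume k: "k<n"
    then have xk: "x k \<in> carrier_vec d" "dim_vec (x k) = d" using x by auto
    show "(complex_of_real (w k) \<cdot>\<^sub>m outer (tensor_vec (x k) (x k))) $$ (p,q) =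
     complex_of_real (w k) * (x k $ (p div d) * x k $ (p mod d) * cnj (x k $ (q div d) * x k $ (q mod d)))"
      using p q xk by (simp add: outer_tensor_index)
  qed
  then show ?thesis using p q by (simp add: msum_index)
qed

lemma rhs_index:
  assumes p: "p < d*d" and q: "q < d*d"
  shows "(complex_of_real (1 / real ((d+1) choose 2)) \<cdot>\<^sub>m sym_proj d) $$ (p,q) =
    ((if p div d = q div d \<and> p mod d = q mod d then 1 else 0) + (if p div d = q mod d \<and> p mod d = q div d then 1 else 0)) / of_nat (d*(d+1))"
proof -
  have pq: "(p = q) = (p div d = q div d \<and> p mod d = q mod d)"
    by (metis div_mult_mod_eq)
  have "(complex_of_real (1 / real ((d+1) choose 2)) \<cdot>\<^sub>m sym_proj d) $$ (p,q) =
    complex_of_real (1 / real ((d+1) choose 2)) * (1/2) * ((if p = q then 1 else 0) + (if p div d = q mod d \<and> p mod d = q div d then 1 else 0))"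
    using p q by (simp add: sym_proj_def swap_op_def)
  then show ?thesis unfolding const_eq pq by simp
qed

lemma idx_bound: "a < d \<Longrightarrow> b < d \<Longrightarrow> a*d+b < d*(d::nat)"
proof -
  assume a: "a<d" and b: "b<d"
  have "a*d+b < a*d + d" using b by simp
  also have "\<dots> = (a+1)*d" by simp
  also have "\<dots> \<le> d*d" proof (rule mult_le_mono1) show "a+1 \<le> d" using a by simp qed
  finally show ?thesis .
qed

lemma design_iff:
  "weighted_proj_2design d n x \<longleftrightarrow> (\<forall>k<n. x k \<in> carrier_vec d \<and> vnorm2 (x k) = 1) \<and>
     (\<exists>w. (\<forall>k<n. w k \<ge> 0) \<and> (\<Sum>k<n. w k) = 1 \<and> Dc d n x w)"
proof -
  have key: "msum (d*d) (d*d) n (\<lambda>k. complex_of_real (w k) \<cdot>\<^sub>m outer (tensor_vec (x k) (x k)))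
        = complex_of_real (1 / real ((d+1) choose 2)) \<cdot>\<^sub>m sym_proj d \<longleftrightarrow> Dc d n x w"
    if x: "\<And>k. k<n \<Longrightarrow> x k \<in> carrier_vec d" for w
  proof
    assume eq: "msum (d*d) (d*d) n (\<lambda>k. complex_of_real (w k) \<cdot>\<^sub>m outer (tensor_vec (x k) (x k)))
        = complex_of_real (1 / real ((d+1) choose 2)) \<cdot>\<^sub>m sym_proj d"
    show "Dc d n x w" unfolding Dc_def
    proof (intro allI impI)
      fix a b c e assume a: "a<d" and b: "b<d" and c: "c<d" and e: "e<d"
      have p: "a*d+b < d*d" and q: "c*d+e < d*d" using idx_bound a b c e by auto
      have dv1: "(a*d+b) div d = a" "(a*d+b) mod d = b" if "b<d" for a b :: nat
      proof -
        have "(b + a*d) div d = b div d + a" using that by (subst div_mult_self1) auto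
        then show "(a*d+b) div d = a" using that by (simp add: add.commute)
        show "(a*d+b) mod d = b" using that by simp
      qed
      have dv: "(a*d+b) div d = a" "(a*d+b) mod d = b" "(c*d+e) div d = c" "(c*d+e) mod d = e"
        using dv1 b e by auto
      have eq2: "msum (d*d) (d*d) n (\<lambda>k. complex_of_real (w k) \<cdot>\<^sub>m outer (tensor_vec (x k) (x k))) $$ (a*d+b, c*d+e)
        = (complex_of_real (1 / real ((d+1) choose 2)) \<cdot>\<^sub>m sym_proj d) $$ (a*d+b, c*d+e)"
        using eq by (rule arg_cong)
      from trans[OF trans[OF lhs_index[OF x p q, symmetric] eq2] rhs_index[OF p q], unfolded dv]
      show "(\<Sum>k<n. complex_of_real (w k) * (x k $ a * x k $ b * cnj (x k $ c * x k $ e))) =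
        ((if a=c \<and> b=e then 1 else 0) + (if a=e \<and> b=c then 1 else 0)) / of_nat (d*(d+1))"
        .
    qed
  next
    assume D: "Dc d n x w"
    show "msum (d*d) (d*d) n (\<lambda>k. complex_of_real (w k) \<cdot>\<^sub>m outer (tensor_vec (x k) (x k)))
        = complex_of_real (1 / real ((d+1) choose 2)) \<cdot>\<^sub>m sym_proj d"
    proof (rule eq_matI)
      fix p q assume "p < dim_row (complex_of_real (1 / real ((d+1) choose 2)) \<cdot>\<^sub>m sym_proj d)"
        and "q < dim_col (complex_of_real (1 / real ((d+1) choose 2)) \<cdot>\<^sub>m sym_proj d)"
      then have p: "p < d*d" and q: "q < d*d" by (auto simp: sym_proj_def swap_op_def)
      have dd: "0 < d" using p by (cases d) auto
      have lt: "p div d < d" "p mod d < d" "q div d < d" "q mod d < d"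
        using p q dd by (auto simp: less_mult_imp_div_less)
      show "msum (d*d) (d*d) n (\<lambda>k. complex_of_real (w k) \<cdot>\<^sub>m outer (tensor_vec (x k) (x k))) $$ (p,q) =
         (complex_of_real (1 / real ((d+1) choose 2)) \<cdot>\<^sub>m sym_proj d) $$ (p,q)"
        by (rule trans[OF lhs_index[OF x p q] trans[OF D[unfolded Dc_def, rule_format, OF lt] rhs_index[OF p q, symmetric]]])
    qed (auto simp: sym_proj_def swap_op_def)
  qed
  show ?thesis unfolding weighted_proj_2design_def
    using key by blast
qed




lemma rank_ge1:
  assumes A: "A \<in> carrier_mat n nc" and i: "i < n" and j: "j < nc" and nz: "A $$ (i,j) \<noteq> (0::complex)"
  shows "vec_space.rank n A \<ge> 1"
  using vec_space.rank_ge1[OF assms] .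

lemma vnorm_nz: assumes "x \<in> carrier_vec d" "vnorm2 x = 1" shows "\<exists>i<d. x $ i \<noteq> 0"
proof (rule ccontr)
  assume "\<not> ?thesis"
  then have "vnorm2 x = 0" using assms(1) unfolding vnorm2_def by simp
  then show False using assms(2) by simp
qed

lemma design_to_eb:
  assumes D: "weighted_proj_2design d n x"
  shows "\<exists>m\<le>n. \<exists>R. eb_decomp d d (Zmap d) m R"
proof -
  obtain w where xc: "\<And>k. k<n \<Longrightarrow> x k \<in> carrier_vec d \<and> vnorm2 (x k) = 1"
    and w0: "\<And>k. k<n \<Longrightarrow> w k \<ge> 0" and Dc: "Dc d n x w"
    using D unfolding design_iff by blast
  define S where "S = {k\<in>{..<n}. w k \<noteq> 0}"
  have finS: "finite S" unfolding S_def by simp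
  define m where "m = card S"
  have mn: "m \<le> n" unfolding m_def S_def by (rule order_trans[OF card_mono[of "{..<n}"]]) auto
  obtain h where h: "bij_betw h {0..<m} S" using ex_bij_betw_nat_finite[OF finS] unfolding m_def by blast
  have hS: "\<And>j. j<m \<Longrightarrow> h j \<in> S" using h by (auto simp: bij_betw_def)
  then have hn: "\<And>j. j<m \<Longrightarrow> h j < n" and hw: "\<And>j. j<m \<Longrightarrow> w (h j) > 0"
    unfolding S_def using w0 by force+
  define s where "s = (\<lambda>k. complex_of_real (sqrt (real d * w k)))"
  define R where "R = (\<lambda>j. mat d d (\<lambda>(a,c). s (h j) * x (h j) $ a * cnj (x (h j) $ c)))"
  have Rc: "\<And>j. j<m \<Longrightarrow> R j \<in> carrier_mat d d" unfolding R_def by simp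
  have ss: "\<And>k. k<n \<Longrightarrow> s k * cnj (s k) = of_nat d * complex_of_real (w k)"
  proof -
    fix k assume "k<n"
    then have "w k \<ge> 0" using w0 by simp
    then have "sqrt (real d * w k) * sqrt (real d * w k) = real d * w k" by simp
    then show "s k * cnj (s k) = of_nat d * complex_of_real (w k)" unfolding s_def
      by (metis Reals_of_real complex_cnj_complex_of_real of_real_mult of_real_of_nat_eq)
  qed
  have G: "Gc d m R" unfolding Gc_def
  proof (intro allI impI)
    fix a b c e assume a: "a<d" and b: "b<d" and c: "c<d" and e: "e<d"
    define f where "f = (\<lambda>k. of_nat d * (complex_of_real (w k) * (x k $ a * x k $ e * cnj (x k $ c * x k $ b))))"
    have "(\<Sum>j<m. R j $$ (a,c) * cnj (R j $$ (b,e))) = (\<Sum>j<m. f (h j))"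
    proof (intro sum.cong refl)
      fix j assume "j \<in> {..<m}"
      then have j: "j<m" by simp
      have "R j $$ (a,c) * cnj (R j $$ (b,e)) = (s (h j) * cnj (s (h j))) * (x (h j) $ a * x (h j) $ e * cnj (x (h j) $ c * x (h j) $ b))"
        unfolding R_def using a b c e by (simp add: algebra_simps)
      then show "R j $$ (a,c) * cnj (R j $$ (b,e)) = f (h j)" unfolding f_def ss[OF hn[OF j]] by simp
    qed
    also have "\<dots> = sum f S" using sum.reindex_bij_betw[OF h, of f] by (simp add: lessThan_atLeast0)
    also have "\<dots> = (\<Sum>k<n. f k)"
      by (rule sum.mono_neutral_left) (auto simp: S_def f_def)
    also have "\<dots> = of_nat d * ((if a=c \<and> e=b then 1 else 0) + (if a=b \<and> e=c then 1 else 0)) / of_nat (d*(d+1))"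
      using Dc a b c e unfolding Dc_def f_def by (simp add: sum_distrib_left[symmetric])
    also have "\<dots> = ((if a=c \<and> b=e then 1 else 0) + (if a=b \<and> c=e then 1 else 0)) / of_nat (d+1)"
    proof -
      have dz: "(of_nat d::complex) \<noteq> 0" using a by simp
      have gen: "\<And>t::complex. of_nat d * t / of_nat (d*(d+1)) = t / of_nat (d+1)"
        by (simp only: of_nat_mult mult_divide_mult_cancel_left[OF dz])
      show ?thesis unfolding gen by (intro arg_cong2[where f="(/)"] refl arg_cong2[where f="(+)"]) auto
    qed
    finally show "(\<Sum>j<m. R j $$ (a,c) * cnj (R j $$ (b,e))) =
      ((if a=c \<and> b=e then 1 else 0) + (if a=b \<and> c=e then 1 else 0)) / of_nat (d+1)" .
  qed
  have rank: "vec_space.rank d (R j) = 1" if j: "j<m" for j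
  proof -
    have "vec_space.rank d (R j) \<le> 1"
      by (rule vec_space.rank_le_1_product_entries[OF Rc[OF j], where f="\<lambda>a. s (h j) * x (h j) $ a" and g="\<lambda>c. cnj (x (h j) $ c)"])
        (simp add: R_def)
    moreover obtain i where i: "i<d" "x (h j) $ i \<noteq> 0" using vnorm_nz xc hn[OF j] by blast
    have "s (h j) \<noteq> 0" unfolding s_def using hw[OF j] i(1) by simp
    then have "R j $$ (i,i) \<noteq> 0" using i unfolding R_def by simp
    then have "vec_space.rank d (R j) \<ge> 1" using rank_ge1[OF Rc[OF j] i(1) i(1)] by simp
    ultimately show ?thesis by simp
  qed
  have "eb_decomp d d (Zmap d) m R"
    unfolding eb_decomp_def using Rc rank G_to_TP[OF Rc G] G_to_Z[OF Rc G] by blast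
  then show ?thesis using mn by blast
qed



lemma rank1_factor:
  assumes R: "R \<in> carrier_mat d d" and r: "vec_space.rank d R = 1"
  shows "\<exists>u g a0. a0 < d \<and> u a0 \<noteq> 0 \<and> (\<forall>a<d. \<forall>c<d. R $$ (a,c) = u a * g c)"
proof -
  have "\<exists>a0<d. \<exists>c0<d. R $$ (a0,c0) \<noteq> 0"
  proof (rule ccontr)
    assume "\<not> ?thesis"
    then have "R = 0\<^sub>m d d" using R by (intro eq_matI) auto
    then have "vec_space.rank d R = 0" using vec_space.rank_0I by metis
    then show False using r by simp
  qed
  then obtain a0 c0 where a0: "a0<d" and c0: "c0<d" and nz: "R $$ (a0,c0) \<noteq> 0" by blast
  have minor: "R $$ (a,c) * R $$ (b,e) = R $$ (a,e) * R $$ (b,c)" if "a<d" "b<d" "c<d" "e<d" for a b c e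
  proof (rule ccontr)
    assume "\<not> ?thesis"
    then have "vec_space.rank d R \<ge> 2" using vec_space.rank_ge2[OF R that] by simp
    then show False using r by simp
  qed
  show ?thesis
  proof (intro exI conjI allI impI)
    show "a0 < d" by fact
    show "R $$ (a0,c0) \<noteq> 0" by fact
    fix a c assume a: "a<d" and c: "c<d"
    have "R $$ (a,c) * R $$ (a0,c0) = R $$ (a,c0) * R $$ (a0,c)" using minor[OF a a0 c c0] .
    then show "R $$ (a,c) = R $$ (a,c0) * (R $$ (a0,c) / R $$ (a0,c0))"
      using nz by (simp add: field_simps)
  qed
qed

lemma sym_normalize:
  assumes a0: "a0 < d" and u0: "u a0 \<noteq> 0"
    and fac: "\<And>a c. a<d \<Longrightarrow> c<d \<Longrightarrow> R $$ (a,c) = u a * g c"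
    and sym: "\<And>a e. a<d \<Longrightarrow> e<d \<Longrightarrow> u a * cnj (g e) = u e * cnj (g a)"
  shows "\<exists>\<kappa> x. x \<in> carrier_vec d \<and> vnorm2 x = 1 \<and> (\<forall>a<d. \<forall>c<d. R $$ (a,c) = \<kappa> * x $ a * cnj (x $ c))"
proof -
  define N2 where "N2 = (\<Sum>a<d. (cmod (u a))\<^sup>2)"
  have "(cmod (u a0))\<^sup>2 \<le> N2" unfolding N2_def
    by (rule member_le_sum) (use a0 in auto)
  moreover have "(cmod (u a0))\<^sup>2 > 0" using u0 by simp
  ultimately have N2p: "N2 > 0" by linarith
  define N where "N = sqrt N2"
  have Np: "N > 0" unfolding N_def using N2p by simp
  have NN: "N * N = N2" unfolding N_def using N2p by simp
  define x where "x = vec d (\<lambda>a. u a / complex_of_real N)"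
  define \<kappa> where "\<kappa> = g a0 / cnj (u a0) * complex_of_real N2"
  show ?thesis
  proof (intro exI conjI allI impI)
    show "x \<in> carrier_vec d" unfolding x_def by simp
    have "vnorm2 x = (\<Sum>a<d. (cmod (u a))\<^sup>2 / N2)"
      unfolding vnorm2_def x_def using Np NN by (simp add: norm_divide power_divide power2_eq_square)
    also have "\<dots> = 1" using N2p by (simp add: sum_divide_distrib[symmetric] N2_def)
    finally show "vnorm2 x = 1" .
    fix a c assume a: "a<d" and c: "c<d"
    have gc: "g c = cnj (u c) * g a0 / cnj (u a0)"
    proof -
      have "u a0 * cnj (g c) = u c * cnj (g a0)" using sym[OF a0 c] .
      then have "cnj (u a0) * g c = cnj (u c) * g a0"
        by (metis complex_cnj_cnj complex_cnj_mult)
      then show ?thesis using u0 by (simp add: field_simps)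
    qed
    have "complex_of_real N2 = complex_of_real N * cnj (complex_of_real N)" using NN by (metis of_real_mult complex_cnj_complex_of_real)
    then show "R $$ (a,c) = \<kappa> * x $ a * cnj (x $ c)"
      unfolding fac[OF a c] gc \<kappa>_def x_def using a c Np u0 by (simp add: field_simps)
  qed
qed

lemma eb_to_design:
  assumes E: "eb_decomp d d (Zmap d) n R" and d1: "d \<ge> 1"
  shows "\<exists>x. weighted_proj_2design d n x"
proof -
  have Rc: "\<And>k. k<n \<Longrightarrow> R k \<in> carrier_mat d d" and rk: "\<And>k. k<n \<Longrightarrow> vec_space.rank d (R k) = 1"
    and Z: "\<forall>X \<in> carrier_mat d d. Zmap d X = msum d d n (\<lambda>k. R k * X * mat_adjoint (R k))"
    using E unfolding eb_decomp_def by auto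
  have G: "Gc d n R" by (rule eb_to_G[OF Rc Z])
  have "\<forall>k. \<exists>u g a0. k<n \<longrightarrow> a0 < d \<and> u a0 \<noteq> 0 \<and> (\<forall>a<d. \<forall>c<d. R k $$ (a,c) = u a * g c)"
    using rank1_factor[OF Rc rk] by blast
  then obtain U Gf A where UG: "\<And>k. k<n \<Longrightarrow> A k < d \<and> U k (A k) \<noteq> 0 \<and> (\<forall>a<d. \<forall>c<d. R k $$ (a,c) = U k a * Gf k c)"
    by metis
  have sym: "U k a * cnj (Gf k e) = U k e * cnj (Gf k a)" if k: "k<n" and a: "a<d" and e: "e<d" for k a e
  proof -
    define D where "D = (\<lambda>k. U k a * cnj (Gf k e) - U k e * cnj (Gf k a))"
    have DD: "complex_of_real ((cmod (D k))\<^sup>2) = R k $$ (a,e) * cnj (R k $$ (a,e)) - R k $$ (a,a) * cnj (R k $$ (e,e))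
       - R k $$ (e,e) * cnj (R k $$ (a,a)) + R k $$ (e,a) * cnj (R k $$ (e,a))" if k: "k<n" for k
    proof -
      have "complex_of_real ((cmod (D k))\<^sup>2) = D k * cnj (D k)" using complex_norm_square by metis
      then show ?thesis using UG[OF k] a e unfolding D_def by (simp add: algebra_simps)
    qed
    have "complex_of_real (\<Sum>k<n. (cmod (D k))\<^sup>2) = (\<Sum>k<n. R k $$ (a,e) * cnj (R k $$ (a,e))) - (\<Sum>k<n. R k $$ (a,a) * cnj (R k $$ (e,e)))
       - (\<Sum>k<n. R k $$ (e,e) * cnj (R k $$ (a,a))) + (\<Sum>k<n. R k $$ (e,a) * cnj (R k $$ (e,a)))"
    proof -
      have "complex_of_real (\<Sum>k<n. (cmod (D k))\<^sup>2) = (\<Sum>k<n. complex_of_real ((cmod (D k))\<^sup>2))"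
        by (rule of_real_sum)
      also have "\<dots> = (\<Sum>k<n. R k $$ (a,e) * cnj (R k $$ (a,e)) - R k $$ (a,a) * cnj (R k $$ (e,e))
       - R k $$ (e,e) * cnj (R k $$ (a,a)) + R k $$ (e,a) * cnj (R k $$ (e,a)))"
        by (intro sum.cong refl DD) simp
      finally show ?thesis by (simp only: sum.distrib sum_subtractf)
    qed
    also have "\<dots> = 0" using G a e unfolding Gc_def by (simp add: diff_divide_distrib[symmetric] add_divide_distrib[symmetric])
    finally have "complex_of_real (\<Sum>k<n. (cmod (D k))\<^sup>2) = 0" .
    then have "(\<Sum>k<n. (cmod (D k))\<^sup>2) = 0" by (simp only: of_real_eq_0_iff)
    then have "(cmod (D k))\<^sup>2 = 0" using k by (subst (asm) sum_nonneg_eq_0_iff) auto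
    then show ?thesis unfolding D_def by simp
  qed
  have "\<forall>k. \<exists>\<kappa> x. k<n \<longrightarrow> x \<in> carrier_vec d \<and> vnorm2 x = 1 \<and> (\<forall>a<d. \<forall>c<d. R k $$ (a,c) = \<kappa> * x $ a * cnj (x $ c))"
  proof
    fix k show "\<exists>\<kappa> x. k<n \<longrightarrow> x \<in> carrier_vec d \<and> vnorm2 x = 1 \<and> (\<forall>a<d. \<forall>c<d. R k $$ (a,c) = \<kappa> * x $ a * cnj (x $ c))"
    proof (cases "k<n")
      case True
      show ?thesis using sym_normalize[of "A k" d "U k" "R k" "Gf k"] UG[OF True] sym[OF True] True by blast
    qed simp
  qed
  then obtain K X where KX: "\<And>k. k<n \<Longrightarrow> X k \<in> carrier_vec d \<and> vnorm2 (X k) = 1 \<and> (\<forall>a<d. \<forall>c<d. R k $$ (a,c) = K k * X k $ a * cnj (X k $ c))"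
    by metis
  define w where "w = (\<lambda>k. (cmod (K k))\<^sup>2 / real d)"
  have dz: "(of_nat d :: complex) \<noteq> 0" using d1 by simp
  have kk: "complex_of_real ((cmod (K k))\<^sup>2) = K k * cnj (K k)" for k using complex_norm_square by metis
  have Dc: "Dc d n X w" unfolding Dc_def
  proof (intro allI impI)
    fix a b c e assume a: "a<d" and b: "b<d" and c: "c<d" and e: "e<d"
    have "(\<Sum>k<n. complex_of_real (w k) * (X k $ a * X k $ b * cnj (X k $ c * X k $ e))) =
      (\<Sum>k<n. R k $$ (a,c) * cnj (R k $$ (e,b)) / of_nat d)"
    proof (intro sum.cong refl)
      fix k assume "k \<in> {..<n}" then have k: "k<n" by simp
      have "complex_of_real (w k) = K k * cnj (K k) / of_nat d" unfolding w_def kk[symmetric] by simp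
      then show "complex_of_real (w k) * (X k $ a * X k $ b * cnj (X k $ c * X k $ e)) = R k $$ (a,c) * cnj (R k $$ (e,b)) / of_nat d"
      proof -
        have Rac: "R k $$ (a,c) = K k * X k $ a * cnj (X k $ c)" and Reb: "R k $$ (e,b) = K k * X k $ e * cnj (X k $ b)"
          using KX[OF k] a b c e by auto
        have "R k $$ (a,c) * cnj (R k $$ (e,b)) = K k * cnj (K k) * (X k $ a * X k $ b * cnj (X k $ c * X k $ e))"
          unfolding Rac Reb by (simp only: complex_cnj_mult complex_cnj_cnj ac_simps)
        then show ?thesis using \<open>complex_of_real (w k) = K k * cnj (K k) / of_nat d\<close> by simp
      qed
    qed
    also have "\<dots> = (\<Sum>k<n. R k $$ (a,c) * cnj (R k $$ (e,b))) / of_nat d" by (simp add: sum_divide_distrib)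
    also have "\<dots> = ((if a=c \<and> e=b then 1 else 0) + (if a=e \<and> c=b then 1 else 0)) / of_nat (d+1) / of_nat d"
      using G a b c e unfolding Gc_def by simp
    also have "\<dots> = ((if a=c \<and> b=e then 1 else 0) + (if a=e \<and> b=c then 1 else 0)) / of_nat (d*(d+1))"
    proof -
      have c1: "(a=c \<and> e=b) = (a=c \<and> b=e)" "(a=e \<and> c=b) = (a=e \<and> b=c)" by auto
      have dd: "\<And>t::complex. t / of_nat (d+1) / of_nat d = t / of_nat (d*(d+1))"
        by (simp add: divide_divide_eq_left algebra_simps)
      show ?thesis unfolding c1 dd ..
    qed
    finally show "(\<Sum>k<n. complex_of_real (w k) * (X k $ a * X k $ b * cnj (X k $ c * X k $ e))) =
      ((if a=c \<and> b=e then 1 else 0) + (if a=e \<and> b=c then 1 else 0)) / of_nat (d*(d+1))" .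
  qed
  have wsum: "(\<Sum>k<n. w k) = 1"
  proof -
    have one: "(\<Sum>a<d. (cmod (X k $ a))\<^sup>2) = 1" if k: "k<n" for k
      using KX[OF k] unfolding vnorm2_def by auto
    have "complex_of_real (\<Sum>k<n. (cmod (K k))\<^sup>2) = (\<Sum>k<n. \<Sum>a<d. \<Sum>b<d. R k $$ (a,b) * cnj (R k $$ (a,b)))"
    proof -
      have "complex_of_real ((cmod (K k))\<^sup>2) = (\<Sum>a<d. \<Sum>b<d. R k $$ (a,b) * cnj (R k $$ (a,b)))" if k: "k<n" for k
      proof -
        have "(\<Sum>a<d. \<Sum>b<d. R k $$ (a,b) * cnj (R k $$ (a,b))) = (\<Sum>a<d. \<Sum>b<d. complex_of_real ((cmod (K k))\<^sup>2 * (cmod (X k $ a))\<^sup>2 * (cmod (X k $ b))\<^sup>2))"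
        proof (intro sum.cong refl)
          fix a b assume "a \<in> {..<d}" "b \<in> {..<d}"
          then have a: "a<d" and b: "b<d" by auto
          have "R k $$ (a,b) * cnj (R k $$ (a,b)) = complex_of_real ((cmod (R k $$ (a,b)))\<^sup>2)" using complex_norm_square by metis
          also have "cmod (R k $$ (a,b)) = cmod (K k) * cmod (X k $ a) * cmod (X k $ b)"
            using KX[OF k] a b by (simp add: norm_mult)
          finally show "R k $$ (a,b) * cnj (R k $$ (a,b)) = complex_of_real ((cmod (K k))\<^sup>2 * (cmod (X k $ a))\<^sup>2 * (cmod (X k $ b))\<^sup>2)"
            by (simp add: power_mult_distrib)
        qed
        also have "\<dots> = complex_of_real (\<Sum>a<d. \<Sum>b<d. (cmod (K k))\<^sup>2 * (cmod (X k $ a))\<^sup>2 * (cmod (X k $ b))\<^sup>2)"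
          by (simp only: of_real_sum)
        also have "(\<Sum>a<d. \<Sum>b<d. (cmod (K k))\<^sup>2 * (cmod (X k $ a))\<^sup>2 * (cmod (X k $ b))\<^sup>2) =
           (cmod (K k))\<^sup>2 * (\<Sum>a<d. (cmod (X k $ a))\<^sup>2) * (\<Sum>b<d. (cmod (X k $ b))\<^sup>2)"
        proof -
          define q where "q = (\<lambda>a. (cmod (X k $ a))\<^sup>2)"
          define c where "c = (cmod (K k))\<^sup>2"
          have "c * (\<Sum>a<d. q a) * (\<Sum>b<d. q b) = c * ((\<Sum>a<d. q a) * (\<Sum>b<d. q b))" by (rule mult.assoc)
          also have "(\<Sum>a<d. q a) * (\<Sum>b<d. q b) = (\<Sum>a<d. \<Sum>b<d. q a * q b)" by (rule sum_product)
          also have "c * (\<Sum>a<d. \<Sum>b<d. q a * q b) = (\<Sum>a<d. \<Sum>b<d. c * (q a * q b))" by (simp add: sum_distrib_left)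
          finally show ?thesis unfolding q_def c_def by (simp add: mult.assoc)
        qed
        also have "\<dots> = complex_of_real ((cmod (K k))\<^sup>2)" using one[OF k] by simp
        finally show ?thesis by simp
      qed
      then show ?thesis by simp
    qed
    also have "\<dots> = (\<Sum>a<d. \<Sum>b<d. \<Sum>k<n. R k $$ (a,b) * cnj (R k $$ (a,b)))"
      by (simp add: sum.swap[of _ "{..<n}"] sum.swap[of _ "{..<n}" "{..<d}"])
    also have "\<dots> = (\<Sum>a<d. \<Sum>b<d. (1 + (if a = b then 1 else 0)) / of_nat (d+1))"
      using G unfolding Gc_def by (intro sum.cong refl) simp
    also have "\<dots> = (\<Sum>a<d. (of_nat d + 1) / of_nat (d+1))"
      by (intro sum.cong refl) (simp add: sum.distrib add_divide_distrib sum_divide_distrib[symmetric] sum.delta)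
    also have "\<dots> = of_nat d"
    proof -
      have nz: "(1 + of_nat d :: complex) \<noteq> 0" by (metis of_nat_Suc of_nat_eq_0_iff nat.distinct(1) add.commute)
      have "(\<Sum>a<d. (of_nat d + 1) / (of_nat (d+1)::complex)) = of_nat d * ((1 + of_nat d) / (1 + of_nat d))"
        by (simp add: add.commute)
      then show ?thesis using nz by simp
    qed
    finally have "(\<Sum>k<n. (cmod (K k))\<^sup>2) = real d" by (metis of_real_eq_iff of_real_of_nat_eq)
    then show ?thesis unfolding w_def using d1 by (simp add: sum_divide_distrib[symmetric])
  qed
  have "weighted_proj_2design d n X"
    unfolding design_iff using KX wsum Dc by (intro conjI exI[of _ w]) (auto simp: w_def)
  then show ?thesis by blast
qed


theorem theorem1:
  fixes d :: nat
  assumes "d \<ge> 1"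
  shows "(LEAST n. \<exists>x. weighted_proj_2design d n x) = ebr d d (Zmap d)"
proof -
  define P where "P = (\<lambda>n. \<exists>x. weighted_proj_2design d n x)"
  define Q where "Q = (\<lambda>n. \<exists>R. eb_decomp d d (Zmap d) n R)"
  have QP: "\<And>n. Q n \<Longrightarrow> P n" unfolding P_def Q_def using eb_to_design assms by blast
  have PQ: "\<And>n. P n \<Longrightarrow> \<exists>m\<le>n. Q m" unfolding P_def Q_def using design_to_eb by blast
  have "Least P = Least Q"
  proof (cases "\<exists>n. P n")
    case True
    then have P0: "P (Least P)" by (rule LeastI_ex)
    then obtain m where m: "m \<le> Least P" "Q m" using PQ by blast
    then have "Least P \<le> m" using QP Least_le by blast
    then have "Q (Least P)" using m by simp
    moreover have "\<And>n. Q n \<Longrightarrow> Least P \<le> n" using QP Least_le by blast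
    ultimately show ?thesis by (intro Least_equality[symmetric])
  next
    case False
    then have "\<not> (\<exists>n. Q n)" using QP by blast
    then have "P = Q" using False by (intro ext) blast
    then show ?thesis by simp
  qed
  then show ?thesis unfolding P_def Q_def ebr_def .
qed

end
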